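(* Let $n\in\{1,2,3\}$, let $\Omega\subset\mathbb{R}^n$ be a bounded domain with smooth boundary and outward unit normal $\nu$, and let $T>0$. Let $u=u(x,t)$ satisfy $$u_t=\Delta u+f(x,t)\ \text{ in }\Omega\times]0,T[,\qquad u(\cdot,0)=0\ \text{ in }\Omega,$$ with enough regularity for the boundary traces and Green's formula below to make sense. Assume: (A.1) there is $T_0\in[0,T[$ such that $f(x,t)=\chi_D(x,t)\rho(x,t)$, where $D\subset\overline\Omega\times[T_0,T]$ is Lebesgue measurable and $\rho$ is essentially bounded on $D$; (A.2) there exist positive numbers $\delta<T-T_0$, $C_1$, $C_2$ and $p\in[0,\infty[$ such that, with $D(s)=D\cap(\mathbb{R}^n\times\{T_0+s\})$, the $n$-dimensional Lebesgue measure satisfies $|D(s)|\ge C_1 s^p$ for almost all $s\in[0,\delta]$, and either $\rho(x,t)\ge C_2$ for almost all $(x,t)\in D\cap(\mathbb{R}^n\times[T_0,T_0+\delta])$, or $-\rho(x,t)\ge C_2$ for almost all such $(x,t)$. For $\omega\in S^{n-1}$, $s\in\mathbb{R}$ and $\tau>0$ define $$I_\omega(\tau;s)=e^{\tau s}\int_0^T\int_{\partial\Omega}\Big(\frac{\partial v}{\partial\nu}u-\frac{\partial u}{\partial\nu}v\Big)\,dS\,dt,\qquad v(x,t)=e^{\sqrt{\tau}\,x\cdot\omega-\tau t}.$$ Then for every $\omega\in S^{n-1}$, $$\lim_{\tau\to\infty}\frac{\log|I_\omega(\tau;0)|}{\tau}=-T_0.$$ Moreover, if $s<T_0$ then $\lim_{\tau\to\infty}|I_\omega(\tau;s)|=0$,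 and if $s>T_0$ then $\lim_{\tau\to\infty}|I_\omega(\tau;s)|=\infty$.
   Context: $\chi_D$ denotes the indicator function of $D$. *)

theory Defs
  imports "HOL-Analysis.Analysis"
begin

definition dd :: "'a::real_normed_vector \<Rightarrow> ('a \<Rightarrow> real) \<Rightarrow> 'a \<Rightarrow> real" where
  "dd e f z = deriv (\<lambda>s. f (z + s *\<^sub>R e)) 0"

fun Ck :: "nat \<Rightarrow> 'a::euclidean_space set \<Rightarrow> ('a \<Rightarrow> real) \<Rightarrow> bool" where
  "Ck 0 U f = continuous_on U f"
| "Ck (Suc k) U f =
     (continuous_on U f \<and>
      (\<forall>i\<in>Basis. \<forall>x\<in>U. (\<lambda>s. f (x + s *\<^sub>R i)) differentiable (at 0)) \<and>
      (\<forall>i\<in>Basis. Ck k U (dd i f)))"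

definition smooth_on :: "'a::euclidean_space set \<Rightarrow> ('a \<Rightarrow> real) \<Rightarrow> bool" where
  "smooth_on U f \<longleftrightarrow> (\<forall>k. Ck k U f)"

definition grad :: "('a::euclidean_space \<Rightarrow> real) \<Rightarrow> 'a \<Rightarrow> 'a" where
  "grad f x = (\<Sum>i\<in>Basis. dd i f x *\<^sub>R i)"

definition lap_x :: "('a::euclidean_space \<times> real \<Rightarrow> real) \<Rightarrow> 'a \<times> real \<Rightarrow> real" where
  "lap_x \<phi> z = (\<Sum>i\<in>Basis. dd (i, 0) (dd (i, 0) \<phi>) z)"

definition d_t :: "('a::euclidean_space \<times> real \<Rightarrow> real) \<Rightarrow> 'a \<times> real \<Rightarrow> real" where
  "d_t \<phi> z = dd (0, 1) \<phi> z"

definition local_defining_fn :: "'a::euclidean_space set \<Rightarrow> 'a set \<Rightarrow> ('a \<Rightarrow> real) \<Rightarrow> bool" where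
  "local_defining_fn \<Omega> U \<psi> \<longleftrightarrow>
     open U \<and> smooth_on U \<psi> \<and> (\<forall>y\<in>U. grad \<psi> y \<noteq> 0) \<and> \<Omega> \<inter> U = {y\<in>U. \<psi> y < 0}"

definition bounded_smooth_domain :: "'a::euclidean_space set \<Rightarrow> bool" where
  "bounded_smooth_domain \<Omega> \<longleftrightarrow> open \<Omega> \<and> connected \<Omega> \<and> \<Omega> \<noteq> {} \<and> bounded \<Omega> \<and>
     (\<forall>x\<in>frontier \<Omega>. \<exists>U \<psi>. x \<in> U \<and> local_defining_fn \<Omega> U \<psi>)"

definition outward_unit_normal :: "'a::euclidean_space set \<Rightarrow> ('a \<Rightarrow> 'a) \<Rightarrow> bool" where
  "outward_unit_normal \<Omega> \<nu> \<longleftrightarrow>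
     (\<forall>x\<in>frontier \<Omega>. \<exists>U \<psi>. x \<in> U \<and> local_defining_fn \<Omega> U \<psi> \<and>
        \<nu> x = (1 / norm (grad \<psi> x)) *\<^sub>R grad \<psi> x)"

definition hausdorff_pre :: "nat \<Rightarrow> real \<Rightarrow> 'a::euclidean_space set \<Rightarrow> ennreal" where
  "hausdorff_pre k \<delta> A =
     (INF C \<in> {C :: nat \<Rightarrow> 'a set. A \<subseteq> (\<Union>i. C i) \<and> (\<forall>i. bounded (C i) \<and> diameter (C i) \<le> \<delta>)}.
        (\<Sum>i. if C i = {} then 0 else ennreal (unit_ball_vol (real k) * (diameter (C i) / 2) ^ k)))"

definition hausdorff_outer :: "nat \<Rightarrow> 'a::euclidean_space set \<Rightarrow> ennreal" where
  "hausdorff_outer k A = (SUP \<delta> \<in> {0<..}. hausdorff_pre k \<delta> A)"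

definition hausdorff_measure :: "nat \<Rightarrow> 'a::euclidean_space measure" where
  "hausdorff_measure k = measure_of UNIV (sets borel) (hausdorff_outer k)"

definition surface_measure :: "'a::euclidean_space measure" where
  "surface_measure = hausdorff_measure (DIM('a) - 1)"

definition heat_v :: "real \<Rightarrow> 'a::euclidean_space \<Rightarrow> 'a \<times> real \<Rightarrow> real" where
  "heat_v \<tau> \<omega> z = exp (sqrt \<tau> * (fst z \<bullet> \<omega>) - \<tau> * snd z)"

text \<open>I_omega(tau;s); g0 is the boundary trace of u, g1 the trace of its outward normal derivative.\<close>
definition heat_I :: "'a::euclidean_space set \<Rightarrow> ('a \<Rightarrow> 'a) \<Rightarrow> ('a \<times> real \<Rightarrow> real) \<Rightarrow> ('a \<times> real \<Rightarrow> real)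
    \<Rightarrow> real \<Rightarrow> 'a \<Rightarrow> real \<Rightarrow> real \<Rightarrow> real" where
  "heat_I \<Omega> \<nu> g0 g1 T \<omega> s \<tau> = exp (\<tau> * s) *
     (LINT z : frontier \<Omega> \<times> {0<..<T} | (surface_measure \<Otimes>\<^sub>M lborel).
        dd (\<nu> (fst z), 0) (heat_v \<tau> \<omega>) z * g0 z - g1 z * heat_v \<tau> \<omega> z)"

end

theory Submission
  imports Defs "HOL-Real_Asymp.Real_Asymp"
begin

definition kk :: "real \<Rightarrow> 'a::euclidean_space \<Rightarrow> 'a \<times> real \<Rightarrow> real" where
  "kk \<tau> \<omega> e = sqrt \<tau> * (fst e \<bullet> \<omega>) - \<tau> * snd e"

lemma heat_v_shift: "heat_v \<tau> \<omega> (z + s *\<^sub>R e) = heat_v \<tau> \<omega> z * exp (s * kk \<tau> \<omega> e)"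
  unfolding heat_v_def kk_def
  by (simp add: inner_add_left algebra_simps flip: exp_add)

lemma heat_v_deriv:
  "((\<lambda>s. c * heat_v \<tau> \<omega> (z + s *\<^sub>R e)) has_real_derivative (c * kk \<tau> \<omega> e * heat_v \<tau> \<omega> z)) (at 0)"
proof -
  have "((\<lambda>s. c * heat_v \<tau> \<omega> z * exp (s * kk \<tau> \<omega> e)) has_real_derivative
     (c * heat_v \<tau> \<omega> z * (exp (0 * kk \<tau> \<omega> e) * kk \<tau> \<omega> e))) (at 0)"
    by (intro derivative_eq_intros) auto
  then show ?thesis by (simp add: heat_v_shift mult_ac)
qed

lemma dd_heat_v: "dd e (\<lambda>z. c * heat_v \<tau> \<omega> z) = (\<lambda>z. (c * kk \<tau> \<omega> e) * heat_v \<tau> \<omega> z)"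
  unfolding dd_def by (rule ext, rule DERIV_imp_deriv, rule heat_v_deriv)

lemma cont_heat_v: "continuous_on UNIV (\<lambda>z. c * heat_v \<tau> \<omega> z)"
  unfolding heat_v_def by (intro continuous_intros)

lemma Ck_heat_v: "Ck k UNIV (\<lambda>z. c * heat_v \<tau> \<omega> z)"
proof (induction k arbitrary: c)
  case 0 then show ?case using cont_heat_v by simp
next
  case (Suc k)
  have "(\<lambda>s. c * heat_v \<tau> \<omega> (x + s *\<^sub>R i)) differentiable (at 0)" for x i
    using heat_v_deriv[of c \<tau> \<omega> x i] real_differentiable_def by blast
  then show ?case using cont_heat_v Suc
    by (simp add: dd_heat_v)
qed

lemma smooth_heat_v: "smooth_on UNIV (heat_v \<tau> \<omega>)"
  using Ck_heat_v[of _ 1] unfolding smooth_on_def by auto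

lemma heat_v_eq0:
  fixes \<omega> :: "'a::euclidean_space"
  assumes "\<tau> > 0" "norm \<omega> = 1"
  shows "d_t (heat_v \<tau> \<omega>) z + lap_x (heat_v \<tau> \<omega>) z = 0"
proof -
  have d1: "dd e (heat_v \<tau> \<omega>) = (\<lambda>z. kk \<tau> \<omega> e * heat_v \<tau> \<omega> z)" for e
    using dd_heat_v[of e 1] by simp
  have "(\<Sum>i\<in>Basis. (i \<bullet> \<omega>)^2) = \<omega> \<bullet> \<omega>"
    by (subst euclidean_inner[of \<omega> \<omega>]) (simp add: power2_eq_square inner_commute)
  also have "\<dots> = 1" using assms by (simp add: dot_square_norm)
  finally have s: "(\<Sum>i\<in>Basis. (i \<bullet> \<omega>)^2) = 1" .
  have "lap_x (heat_v \<tau> \<omega>) z = (\<Sum>i\<in>Basis. \<tau> * (i \<bullet> \<omega>)^2 * heat_v \<tau> \<omega> z)"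
    unfolding lap_x_def d1 dd_heat_v using assms
    by (intro sum.cong) (auto simp: kk_def power2_eq_square algebra_simps)
  also have "\<dots> = \<tau> * heat_v \<tau> \<omega> z"
    by (simp add: sum_distrib_right[symmetric] sum_distrib_left[symmetric] s mult.assoc)
  finally show ?thesis unfolding d_t_def d1 kk_def by simp
qed

lemma translate_null:
  fixes S :: "'a::euclidean_space set" and e :: 'a
  assumes S: "S \<in> sets lebesgue" "bounded S"
    and no: "\<And>x t. x \<in> S \<Longrightarrow> x + t *\<^sub>R e \<in> S \<Longrightarrow> t \<noteq> 0 \<Longrightarrow> False"
  shows "S \<in> null_sets lebesgue"
proof -
  have Sm: "S \<in> lmeasurable" using S bounded_set_imp_lmeasurable by blast
  obtain R where R: "\<And>x. x \<in> S \<Longrightarrow> norm x \<le> R" using S(2) bounded_iff by blast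
  define W where "W = cball (0::'a) (R + norm e)"
  have Wm: "W \<in> lmeasurable" unfolding W_def by simp
  define m where "m = measure lebesgue S"
  have m0: "m \<ge> 0" unfolding m_def by simp
  have bound: "real N * m \<le> measure lebesgue W" for N :: nat
  proof -
    define A where "A k = (+) ((real k / real N) *\<^sub>R e) ` S" for k :: nat
    have Am: "A k \<in> lmeasurable" for k unfolding A_def by (rule measurable_translation[OF Sm])
    have Ameas: "measure lebesgue (A k) = m" for k unfolding A_def m_def by (rule measure_translation)
    have disj: "disjoint_family_on A {..<N}"
    proof (clarsimp simp: disjoint_family_on_def)
      fix k l assume kl: "k < N" "l < N" "k \<noteq> l"
      show "A k \<inter> A l = {}"
      proof (rule ccontr)
        assume "A k \<inter> A l \<noteq> {}"
        then obtain x y where xy: "x \<in> S" "y \<in> S"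
          "(real k / real N) *\<^sub>R e + x = (real l / real N) *\<^sub>R e + y"
          unfolding A_def by auto
        then have "x + (real k / real N - real l / real N) *\<^sub>R e = y"
          by (simp add: algebra_simps)
        moreover have "real k / real N - real l / real N \<noteq> 0"
          using kl by (simp add: field_simps)
        ultimately show False using no xy by blast
      qed
    qed
    have sub: "(\<Union>k\<in>{..<N}. A k) \<subseteq> W"
    proof
      fix x assume "x \<in> (\<Union>k\<in>{..<N}. A k)"
      then obtain k where "k \<in> {..<N}" "x \<in> A k" by blast
      then obtain y where y: "y \<in> S" "x = (real k / real N) *\<^sub>R e + y" unfolding A_def by auto
      have "norm x \<le> norm ((real k / real N) *\<^sub>R e) + norm y" using y norm_triangle_ineq by blast
      also have "norm ((real k / real N) *\<^sub>R e) \<le> norm e"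
        using \<open>k \<in> {..<N}\<close> by (simp add: field_simps mult_right_mono)
      finally show "x \<in> W" unfolding W_def using R[OF y(1)] by simp
    qed
    have Asets: "A k \<in> sets lebesgue" for k using Am[of k] by (rule fmeasurableD)
    have Us: "(\<Union>k\<in>{..<N}. A k) \<in> sets lebesgue"
      by (rule sets.finite_UN) (simp_all add: Asets)
    have "measure lebesgue (\<Union>k\<in>{..<N}. A k) = (\<Sum>k\<in>{..<N}. measure lebesgue (A k))"
    proof (rule measure_finite_Union)
      show "A ` {..<N} \<subseteq> sets lebesgue" using Asets by blast
      show "emeasure lebesgue (A i) \<noteq> \<infinity>" for i using fmeasurableD2[OF Am[of i]] by (simp only: infinity_ennreal_def not_False_eq_True)
      show "disjoint_family_on A {..<N}" by (rule disj)
    qed simp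
    then have "real N * m = measure lebesgue (\<Union>k\<in>{..<N}. A k)" by (simp add: Ameas)
    also have "\<dots> \<le> measure lebesgue W"
      by (rule measure_mono_fmeasurable[OF sub Us Wm])
    finally show ?thesis .
  qed
  have "m = 0"
  proof (rule ccontr)
    assume "m \<noteq> 0"
    then have mp: "m > 0" using m0 by simp
    obtain N :: nat where "N > measure lebesgue W / m" using reals_Archimedean2 by blast
    then have "real N * m > measure lebesgue W" using mp by (simp add: field_simps)
    with bound[of N] show False by simp
  qed
  then have "emeasure lebesgue S = 0" using emeasure_eq_measure2[OF Sm] unfolding m_def by simp
  then show ?thesis using fmeasurableD[OF Sm] by (rule null_setsI)
qed

lemma frontier_local_null:
  fixes \<Omega> U :: "'a::euclidean_space set" and \<psi> :: "'a \<Rightarrow> real"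
  assumes om: "open \<Omega>" and loc: "local_defining_fn \<Omega> U \<psi>" and x0: "x0 \<in> U"
  shows "\<exists>r>0. frontier \<Omega> \<inter> ball x0 r \<in> null_sets lebesgue"
proof -
  have U: "open U" and sm: "smooth_on U \<psi>" and g: "grad \<psi> x0 \<noteq> 0"
    and OU: "\<Omega> \<inter> U = {y\<in>U. \<psi> y < 0}"
    using loc x0 unfolding local_defining_fn_def by auto
  have C1: "Ck 1 U \<psi>" using sm unfolding smooth_on_def by blast
  then have cpsi: "continuous_on U \<psi>"
    and diffb: "\<And>i x. i \<in> Basis \<Longrightarrow> x \<in> U \<Longrightarrow> (\<lambda>s. \<psi> (x + s *\<^sub>R i)) differentiable (at 0)"
    and cdd: "\<And>i. i \<in> Basis \<Longrightarrow> continuous_on U (dd i \<psi>)"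
    by auto
  obtain i where i: "i \<in> Basis" "dd i \<psi> x0 \<noteq> 0"
    using g unfolding grad_def by (metis (no_types, lifting) scaleR_zero_left sum.neutral)
  have "open (U \<inter> dd i \<psi> -` (-{0}))"
    by (rule continuous_open_preimage[OF cdd[OF i(1)] U]) auto
  moreover have "x0 \<in> U \<inter> dd i \<psi> -` (-{0})" using x0 i by auto
  ultimately obtain r where r: "r > 0" "ball x0 r \<subseteq> U \<inter> dd i \<psi> -` (-{0})"
    using open_contains_ball by blast
  have zero: "\<psi> y = 0" if y: "y \<in> frontier \<Omega>" "y \<in> U" for y
  proof -
    have yn: "y \<notin> \<Omega>" using y om by (simp add: frontier_def interior_open)
    then have "\<not> \<psi> y < 0" using OU y by blast
    moreover have "\<psi> y \<le> 0"
    proof -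
      obtain Tc where Tc: "closed Tc" "U \<inter> \<psi> -` {..0} = U \<inter> Tc"
        using continuous_closedin_preimage[OF cpsi, of "{..0}"] unfolding closedin_closed by auto
      have "\<Omega> \<inter> U \<subseteq> Tc" using OU Tc(2) by auto
      then have "closure (\<Omega> \<inter> U) \<subseteq> Tc" using Tc(1) closure_minimal by blast
      moreover have "y \<in> closure (U \<inter> \<Omega>)"
        using open_Int_closure_subset[OF U, of \<Omega>] y by (auto simp: frontier_def)
      ultimately have "y \<in> U \<inter> Tc" using y by (auto simp: Int_commute)
      then show ?thesis using Tc(2) by auto
    qed
    ultimately show ?thesis by simp
  qed
  define S where "S = frontier \<Omega> \<inter> ball x0 r"
  have "S \<in> null_sets lebesgue"
  proof (rule translate_null[where e=i])
    show "S \<in> sets lebesgue" unfolding S_def by (intro sets.Int) auto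
    show "bounded S" unfolding S_def by auto
  next
    fix x t assume x: "x \<in> S" and xt: "x + t *\<^sub>R i \<in> S" and t: "t \<noteq> 0"
    define \<phi> where "\<phi> s = \<psi> (x + s *\<^sub>R i)" for s
    have seg: "x + s *\<^sub>R i \<in> ball x0 r" if "s \<in> closed_segment 0 t" for s
    proof -
      have "x + s *\<^sub>R i \<in> closed_segment x (x + t *\<^sub>R i)"
        using that by (auto simp: closed_segment_def algebra_simps)
      moreover have "closed_segment x (x + t *\<^sub>R i) \<subseteq> ball x0 r"
        using x xt unfolding S_def by (intro closed_segment_subset) auto
      ultimately show ?thesis by blast
    qed
    have der: "(\<phi> has_real_derivative dd i \<psi> (x + s *\<^sub>R i)) (at s)"
      if "s \<in> closed_segment 0 t" for s
    proof -
      let ?y = "x + s *\<^sub>R i"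
      have yU: "?y \<in> U" using seg[OF that] r by auto
      have "((\<lambda>h. \<psi> (?y + h *\<^sub>R i)) has_real_derivative dd i \<psi> ?y) (at 0)"
        unfolding dd_def using diffb[OF i(1) yU] by (simp add: DERIV_deriv_iff_real_differentiable)
      moreover have "(\<lambda>h. \<psi> (?y + h *\<^sub>R i)) = (\<lambda>h. \<phi> (h + s))"
        by (auto simp: \<phi>_def algebra_simps)
      ultimately show ?thesis using DERIV_shift[of \<phi> _ 0 s] by simp
    qed
    have nz: "dd i \<psi> (x + s *\<^sub>R i) \<noteq> 0" if "s \<in> closed_segment 0 t" for s
      using seg[OF that] r by auto
    have z: "\<phi> 0 = 0" "\<phi> t = 0"
      using x xt zero r unfolding S_def \<phi>_def by auto
    show False
    proof (cases "0 < t")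
      case True
      then obtain z where "0 < z" "z < t" "\<phi> t - \<phi> 0 = (t - 0) * dd i \<psi> (x + z *\<^sub>R i)"
        using MVT2[of 0 t \<phi> "\<lambda>s. dd i \<psi> (x + s *\<^sub>R i)"] der
        by (auto simp: closed_segment_eq_real_ivl)
      then show False using nz[of z] z True by (auto simp: closed_segment_eq_real_ivl)
    next
      case False
      then have tn: "t < 0" using t by simp
      then obtain z where "t < z" "z < 0" "\<phi> 0 - \<phi> t = (0 - t) * dd i \<psi> (x + z *\<^sub>R i)"
        using MVT2[of t 0 \<phi> "\<lambda>s. dd i \<psi> (x + s *\<^sub>R i)"] der
        by (auto simp: closed_segment_eq_real_ivl)
      then show False using nz[of z] z tn by (auto simp: closed_segment_eq_real_ivl)
    qed
  qed
  then show ?thesis using r(1) unfolding S_def by blast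
qed

lemma frontier_null:
  fixes \<Omega> :: "'a::euclidean_space set"
  assumes "bounded_smooth_domain \<Omega>"
  shows "frontier \<Omega> \<in> null_sets lebesgue"
proof -
  have om: "open \<Omega>" "bounded \<Omega>" and loc: "\<forall>x\<in>frontier \<Omega>. \<exists>U \<psi>. x \<in> U \<and> local_defining_fn \<Omega> U \<psi>"
    using assms unfolding bounded_smooth_domain_def by auto
  have "\<forall>x\<in>frontier \<Omega>. \<exists>r>0. frontier \<Omega> \<inter> ball x r \<in> null_sets lebesgue"
    using loc frontier_local_null[OF om(1)] by metis
  then obtain r where r: "\<And>x. x \<in> frontier \<Omega> \<Longrightarrow> r x > 0 \<and> frontier \<Omega> \<inter> ball x (r x) \<in> null_sets lebesgue"
    by metis
  have cpt: "compact (frontier \<Omega>)"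
    using om(2) by (simp add: compact_frontier_bounded)
  obtain C' where C': "C' \<subseteq> frontier \<Omega>" "finite C'" "frontier \<Omega> \<subseteq> (\<Union>c\<in>C'. ball c (r c))"
    using compactE_image[OF cpt, of "frontier \<Omega>" "\<lambda>x. ball x (r x)"] r by force
  have "frontier \<Omega> = (\<Union>c\<in>C'. frontier \<Omega> \<inter> ball c (r c))" using C' by blast
  also have "\<dots> \<in> null_sets lebesgue"
    using C' r by (intro null_sets.finite_UN) auto
  finally show ?thesis .
qed

lemma lborel_null_lebesgue: "N \<in> null_sets lborel \<Longrightarrow> A \<subseteq> N \<Longrightarrow> A \<in> null_sets lebesgue"
  by (rule null_sets_completion_iff2[THEN iffD2], rule bexI)

lemma section_null:
  fixes N :: "('a::euclidean_space \<times> real) set"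
  assumes "N \<in> null_sets lebesgue"
  shows "AE t in lborel. {x. (x, t) \<in> N} \<in> null_sets (lebesgue :: 'a measure)"
proof -
  obtain N' where N': "N' \<in> null_sets (lborel :: ('a \<times> real) measure)" "N \<subseteq> N'"
    using null_sets_completion_iff2[THEN iffD1, OF assms] by blast
  have N0: "N' \<in> null_sets (lborel \<Otimes>\<^sub>M lborel)" unfolding lborel_prod using N'(1) .
  have N'': "N' \<in> sets (lborel \<Otimes>\<^sub>M lborel)" "emeasure (lborel \<Otimes>\<^sub>M lborel) N' = 0"
    by (rule null_setsD2[OF N0], rule null_setsD1[OF N0])
  have "(\<integral>\<^sup>+t. emeasure lborel ((\<lambda>x. (x, t)) -` N') \<partial>lborel) = 0"
    using trans[OF lborel_pair.emeasure_pair_measure_alt2[OF N''(1), symmetric] N''(2)] .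
  then have "AE t in lborel. emeasure lborel ((\<lambda>x. (x, t)) -` N') = 0"
    by (subst (asm) nn_integral_0_iff_AE) (rule lborel_pair.measurable_emeasure_Pair2[OF N''(1)])
  then show ?thesis
  proof (rule AE_mp, intro AE_I2 impI)
    fix t assume "emeasure lborel ((\<lambda>x. (x, t)) -` N') = 0"
    moreover have "(\<lambda>x. (x, t)) -` N' \<in> sets lborel" using sets_Pair2[OF N''(1)] .
    ultimately have "(\<lambda>x. (x, t)) -` N' \<in> null_sets lborel" by (rule null_setsI)
    moreover have "{x. (x, t) \<in> N} \<subseteq> (\<lambda>x. (x, t)) -` N'" using N'(2) by auto
    ultimately show "{x. (x, t) \<in> N} \<in> null_sets lebesgue" by (rule lborel_null_lebesgue)
  qed
qed

lemma times_null:
  fixes A :: "'a::euclidean_space set" and B :: "real set"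
  assumes "A \<in> null_sets lebesgue"
  shows "A \<times> B \<in> null_sets (lebesgue :: ('a \<times> real) measure)"
proof -
  obtain A' where A': "A' \<in> null_sets (lborel :: 'a measure)" "A \<subseteq> A'"
    using null_sets_completion_iff2[THEN iffD1, OF assms] by blast
  have "A' \<times> UNIV \<in> null_sets (lborel \<Otimes>\<^sub>M (lborel :: real measure))"
    by (rule lborel.times_in_null_sets1[OF A'(1)]) simp
  then have "A' \<times> UNIV \<in> null_sets (lborel :: ('a \<times> real) measure)" by (simp add: lborel_prod)
  then show ?thesis by (rule lborel_null_lebesgue) (use A' in auto)
qed

lemma AE_lborel_shift:
  fixes c :: real
  assumes "AE t in lborel. P t"
  shows "AE s in lborel. P (c + s)"
proof -
  have "AE t in distr lborel borel ((+) c). P t" unfolding lborel_distr_plus using assms .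
  then show ?thesis by (rule AE_distrD[rotated]) simp
qed

lemma asy1: fixes a b c :: real assumes "a > 0" "c > 0"
  shows "filterlim (\<lambda>t. c * exp (a * t - b * sqrt t)) at_top at_top"
  using assms by real_asymp

lemma asy2: fixes a b :: real assumes "a > 0"
  shows "((\<lambda>t. exp (b * sqrt t - a * t)) \<longlongrightarrow> 0) at_top"
  using assms by real_asymp

lemma asy3: fixes a b :: real shows "((\<lambda>t. (a + b * sqrt t) / t) \<longlongrightarrow> 0) at_top"
  by real_asymp

lemma lower_ev:
  fixes G :: "real \<Rightarrow> real"
  assumes R: "R \<ge> 0" and eps: "0 < \<epsilon>" "\<epsilon> < \<delta>"
    and low: "\<And>\<eta>. 0 < \<eta> \<Longrightarrow> \<eta> < \<delta> \<Longrightarrow> \<exists>c>0. eventually (\<lambda>\<tau>. \<bar>G \<tau>\<bar> \<ge>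
        c * exp (- (sqrt \<tau> * R) - \<tau> * (T0 + \<eta>)) - K2 * exp (sqrt \<tau> * R - \<tau> * (T0 + \<delta>))) at_top"
  shows "eventually (\<lambda>\<tau>. \<bar>G \<tau>\<bar> \<ge> exp (- \<tau> * (T0 + \<epsilon>))) at_top"
proof -
  obtain c where c: "c > 0" and ev: "eventually (\<lambda>\<tau>. \<bar>G \<tau>\<bar> \<ge>
        c * exp (- (sqrt \<tau> * R) - \<tau> * (T0 + \<epsilon>/2)) - K2 * exp (sqrt \<tau> * R - \<tau> * (T0 + \<delta>))) at_top"
    using low[of "\<epsilon>/2"] eps by auto
  have e1: "eventually (\<lambda>\<tau>. c * exp ((\<epsilon>/2) * \<tau> - R * sqrt \<tau>) \<ge> 2) at_top"
    using asy1[of "\<epsilon>/2" c R] eps c unfolding filterlim_at_top by auto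
  have "((\<lambda>\<tau>. \<bar>K2\<bar> * exp (R * sqrt \<tau> - (\<delta> - \<epsilon>) * \<tau>)) \<longlongrightarrow> \<bar>K2\<bar> * 0) at_top"
    by (intro tendsto_mult tendsto_const asy2) (use eps in auto)
  then have e2: "eventually (\<lambda>\<tau>. \<bar>K2\<bar> * exp (R * sqrt \<tau> - (\<delta> - \<epsilon>) * \<tau>) < 1) at_top"
    by (simp add: order_tendstoD(2))
  show ?thesis using ev e1 e2
  proof eventually_elim
    case (elim \<tau>)
    let ?E = "exp (- \<tau> * (T0 + \<epsilon>))"
    have p: "?E > 0" by simp
    have a: "c * exp (- (sqrt \<tau> * R) - \<tau> * (T0 + \<epsilon>/2)) = ?E * (c * exp ((\<epsilon>/2) * \<tau> - R * sqrt \<tau>))"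
      by (simp add: mult_ac flip: exp_add) (simp add: algebra_simps)
    have b: "K2 * exp (sqrt \<tau> * R - \<tau> * (T0 + \<delta>)) = ?E * (K2 * exp (R * sqrt \<tau> - (\<delta> - \<epsilon>) * \<tau>))"
      by (simp add: mult_ac flip: exp_add) (simp add: algebra_simps)
    have k: "K2 * exp (R * sqrt \<tau> - (\<delta> - \<epsilon>) * \<tau>) \<le> \<bar>K2\<bar> * exp (R * sqrt \<tau> - (\<delta> - \<epsilon>) * \<tau>)"
      by (intro mult_right_mono) auto
    then have k1: "K2 * exp (R * sqrt \<tau> - (\<delta> - \<epsilon>) * \<tau>) \<le> 1" using elim(3) by linarith
    have "?E * (K2 * exp (R * sqrt \<tau> - (\<delta> - \<epsilon>) * \<tau>)) \<le> ?E * 1"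
      by (rule mult_left_mono[OF k1]) (use p in linarith)
    moreover have "?E * 2 \<le> ?E * (c * exp ((\<epsilon>/2) * \<tau> - R * sqrt \<tau>))"
      using elim(2) p by (intro mult_left_mono) auto
    ultimately show ?case using elim(1) a b by linarith
  qed
qed

lemma asym_main:
  fixes G :: "real \<Rightarrow> real" and F :: "real \<Rightarrow> real \<Rightarrow> real"
  assumes \<delta>: "\<delta> > 0" and R: "R \<ge> 0" and K1: "K1 \<ge> 0"
    and FG: "\<And>s. eventually (\<lambda>\<tau>. F s \<tau> = exp (\<tau> * s) * G \<tau>) at_top"
    and up: "eventually (\<lambda>\<tau>. \<bar>G \<tau>\<bar> \<le> K1 * exp (sqrt \<tau> * R - \<tau> * T0)) at_top"
    and low: "\<And>\<eta>. 0 < \<eta> \<Longrightarrow> \<eta> < \<delta> \<Longrightarrow> \<exists>c>0. eventually (\<lambda>\<tau>. \<bar>G \<tau>\<bar> \<ge>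
        c * exp (- (sqrt \<tau> * R) - \<tau> * (T0 + \<eta>)) - K2 * exp (sqrt \<tau> * R - \<tau> * (T0 + \<delta>))) at_top"
  shows "(\<forall>\<^sub>F \<tau> in at_top. F 0 \<tau> \<noteq> 0)
       \<and> ((\<lambda>\<tau>. ln \<bar>F 0 \<tau>\<bar> / \<tau>) \<longlongrightarrow> - T0) at_top
       \<and> (\<forall>s. s < T0 \<longrightarrow> ((\<lambda>\<tau>. \<bar>F s \<tau>\<bar>) \<longlongrightarrow> 0) at_top)
       \<and> (\<forall>s. s > T0 \<longrightarrow> filterlim (\<lambda>\<tau>. \<bar>F s \<tau>\<bar>) at_top at_top)"
proof -
  have le: "eventually (\<lambda>\<tau>. \<bar>G \<tau>\<bar> \<ge> exp (- \<tau> * (T0 + \<epsilon>))) at_top"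
    if "0 < \<epsilon>" "\<epsilon> < \<delta>" for \<epsilon> by (rule lower_ev[OF R that low])
  show ?thesis
proof (intro conjI allI impI)
  have F0: "eventually (\<lambda>\<tau>. F 0 \<tau> = G \<tau>) at_top" using FG[of 0] by simp
  show "\<forall>\<^sub>F \<tau> in at_top. F 0 \<tau> \<noteq> 0"
  proof -
    have L: "eventually (\<lambda>\<tau>. \<bar>G \<tau>\<bar> \<ge> exp (- \<tau> * (T0 + \<delta>/2))) at_top"
      using \<delta> by (intro le) auto
    show ?thesis using L F0 by eventually_elim (metis abs_zero exp_gt_zero not_le)
  qed
  show "((\<lambda>\<tau>. ln \<bar>F 0 \<tau>\<bar> / \<tau>) \<longlongrightarrow> - T0) at_top"
  proof (rule tendstoI)
    fix e :: real assume e: "e > 0"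
    define \<epsilon> where "\<epsilon> = min (e/2) (\<delta>/2)"
    have \<epsilon>: "0 < \<epsilon>" "\<epsilon> < \<delta>" "\<epsilon> < e" using e \<delta> by (auto simp: \<epsilon>_def)
    define K where "K = max K1 1"
    have "((\<lambda>\<tau>. (ln K + R * sqrt \<tau>) / \<tau>) \<longlongrightarrow> 0) at_top" by (rule asy3)
    then have ev3: "eventually (\<lambda>\<tau>. (ln K + R * sqrt \<tau>) / \<tau> < e) at_top"
      using e by (simp add: order_tendstoD(2))
    show "eventually (\<lambda>\<tau>. dist (ln \<bar>F 0 \<tau>\<bar> / \<tau>) (- T0) < e) at_top"
      using le[OF \<epsilon>(1,2)] F0 up ev3 eventually_gt_at_top[of 0]
    proof eventually_elim
      case (elim \<tau>)
      have Gp: "\<bar>G \<tau>\<bar> > 0" using elim(1) by (meson exp_gt_zero less_le_trans)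
      have "\<bar>G \<tau>\<bar> \<le> K * exp (sqrt \<tau> * R - \<tau> * T0)"
        using elim(3) by (smt (verit) K_def exp_gt_zero mult_right_mono)
      then have "ln \<bar>G \<tau>\<bar> \<le> ln (K * exp (sqrt \<tau> * R - \<tau> * T0))"
        using Gp by (subst ln_le_cancel_iff) (auto simp: K_def)
      also have "\<dots> = ln K + (sqrt \<tau> * R - \<tau> * T0)"
        by (subst ln_mult) (auto simp: K_def)
      finally have u: "ln \<bar>G \<tau>\<bar> / \<tau> \<le> (ln K + R * sqrt \<tau>) / \<tau> - T0"
        using elim(5) by (simp add: field_simps)
      have "- \<tau> * (T0 + \<epsilon>) \<le> ln \<bar>G \<tau>\<bar>"
        using elim(1) Gp by (metis ln_exp ln_le_cancel_iff exp_gt_zero)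
      then have l: "- (T0 + \<epsilon>) \<le> ln \<bar>G \<tau>\<bar> / \<tau>"
        using elim(5) by (simp add: field_simps)
      show ?case using u l elim(2,4) \<epsilon> by (simp add: dist_real_def abs_if)
    qed
  qed
next
  fix s assume s: "s < T0"
  have lim: "((\<lambda>\<tau>. K1 * exp (R * sqrt \<tau> - (T0 - s) * \<tau>)) \<longlongrightarrow> K1 * 0) at_top"
    by (intro tendsto_mult tendsto_const asy2) (use s in auto)
  show "((\<lambda>\<tau>. \<bar>F s \<tau>\<bar>) \<longlongrightarrow> 0) at_top"
  proof (rule tendsto_sandwich[OF _ _ tendsto_const])
    show "eventually (\<lambda>\<tau>. 0 \<le> \<bar>F s \<tau>\<bar>) at_top" by simp
    show "eventually (\<lambda>\<tau>. \<bar>F s \<tau>\<bar> \<le> K1 * exp (R * sqrt \<tau> - (T0 - s) * \<tau>)) at_top"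
      using FG[of s] up
    proof eventually_elim
      case (elim \<tau>)
      have "\<bar>F s \<tau>\<bar> = exp (\<tau> * s) * \<bar>G \<tau>\<bar>" using elim(1) by (simp add: abs_mult)
      also have "\<dots> \<le> exp (\<tau> * s) * (K1 * exp (sqrt \<tau> * R - \<tau> * T0))"
        using elim(2) by (intro mult_left_mono) auto
      also have "\<dots> = K1 * exp (R * sqrt \<tau> - (T0 - s) * \<tau>)"
        by (simp add: mult_ac flip: exp_add) (simp add: algebra_simps)
      finally show ?case .
    qed
    show "((\<lambda>\<tau>. K1 * exp (R * sqrt \<tau> - (T0 - s) * \<tau>)) \<longlongrightarrow> 0) at_top" using lim by simp
  qed
next
  fix s assume s: "s > T0"
  define \<epsilon> where "\<epsilon> = min ((s - T0)/2) (\<delta>/2)"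
  have \<epsilon>: "0 < \<epsilon>" "\<epsilon> < \<delta>" "\<epsilon> < s - T0" using s \<delta> unfolding \<epsilon>_def by (simp_all add: min_def)
  have "filterlim (\<lambda>\<tau>. 1 * exp ((s - T0 - \<epsilon>) * \<tau> - 0 * sqrt \<tau>)) at_top at_top"
    by (rule asy1) (use \<epsilon> in auto)
  then have lim: "filterlim (\<lambda>\<tau>. exp ((s - T0 - \<epsilon>) * \<tau>)) at_top at_top" by simp
  show "filterlim (\<lambda>\<tau>. \<bar>F s \<tau>\<bar>) at_top at_top"
  proof (rule filterlim_at_top_mono[OF lim])
    show "eventually (\<lambda>\<tau>. exp ((s - T0 - \<epsilon>) * \<tau>) \<le> \<bar>F s \<tau>\<bar>) at_top"
      using FG[of s] le[OF \<epsilon>(1,2)]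
    proof eventually_elim
      case (elim \<tau>)
      have "exp ((s - T0 - \<epsilon>) * \<tau>) = exp (\<tau> * s) * exp (- \<tau> * (T0 + \<epsilon>))"
        by (simp flip: exp_add) (simp add: algebra_simps)
      also have "\<dots> \<le> exp (\<tau> * s) * \<bar>G \<tau>\<bar>"
        using elim(2) by (intro mult_left_mono) auto
      also have "\<dots> = \<bar>F s \<tau>\<bar>" using elim(1) by (simp add: abs_mult)
      finally show ?case .
    qed
  qed
qed
qed

lemma heat_v_meas: "heat_v \<tau> \<omega> \<in> borel_measurable lebesgue"
proof -
  have "continuous_on UNIV (heat_v \<tau> \<omega>)" unfolding heat_v_def by (intro continuous_intros)
  then have "heat_v \<tau> \<omega> \<in> borel_measurable borel" by (rule borel_measurable_continuous_onI)
  then have "heat_v \<tau> \<omega> \<in> borel_measurable lborel" by (simp add: measurable_lborel2)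
  then show ?thesis by (rule measurable_completion)
qed

lemma closed_leb: "closed S \<Longrightarrow> S \<in> sets lebesgue"
  by (rule sets_completionI_sets) (simp add: borel_closed)

lemma heat_v_pos: "heat_v \<tau> \<omega> z > 0" unfolding heat_v_def by simp

lemma heat_v_le:
  assumes "\<bar>fst z \<bullet> \<omega>\<bar> \<le> R" "\<tau> \<ge> 0" "snd z \<ge> t"
  shows "heat_v \<tau> \<omega> z \<le> exp (sqrt \<tau> * R - \<tau> * t)"
proof -
  have "sqrt \<tau> * (fst z \<bullet> \<omega>) \<le> sqrt \<tau> * R" using assms by (intro mult_left_mono) auto
  moreover have "\<tau> * t \<le> \<tau> * snd z" using assms by (intro mult_left_mono) auto
  ultimately show ?thesis unfolding heat_v_def by simp
qed

lemma heat_v_ge: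
  assumes "\<bar>fst z \<bullet> \<omega>\<bar> \<le> R" "\<tau> \<ge> 0" "snd z \<le> t"
  shows "heat_v \<tau> \<omega> z \<ge> exp (- (sqrt \<tau> * R) - \<tau> * t)"
proof -
  have "sqrt \<tau> * (- R) \<le> sqrt \<tau> * (fst z \<bullet> \<omega>)" using assms by (intro mult_left_mono) auto
  moreover have "\<tau> * snd z \<le> \<tau> * t" using assms by (intro mult_left_mono) auto
  ultimately show ?thesis unfolding heat_v_def by simp
qed

lemma B_lower:
  fixes \<Omega> :: "'a::euclidean_space set" and D :: "('a \<times> real) set" and \<rho> :: "'a \<times> real \<Rightarrow> real"
  assumes Hm: "H \<in> lmeasurable" and HD: "H \<inter> D \<subseteq> closure \<Omega> \<times> {T0..}" and H0: "H \<subseteq> UNIV \<times> {0..}"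
    and Dm: "D \<in> sets lebesgue"
    and \<rho>m: "(\<lambda>z. indicator D z * \<rho> z) \<in> borel_measurable lebesgue"
    and \<rho>b: "AE z in lebesgue. z \<in> D \<longrightarrow> \<bar>\<rho> z\<bar> \<le> M"
    and \<rho>s: "AE z in lebesgue. z \<in> D \<and> snd z \<in> {T0..T0+\<delta>} \<longrightarrow> \<rho> z \<ge> C2"
    and C2: "C2 > 0" and M: "M \<ge> 0" and \<tau>: "\<tau> \<ge> 0"
    and R: "\<And>x. x \<in> closure \<Omega> \<Longrightarrow> \<bar>x \<bullet> \<omega>\<bar> \<le> R"
    and \<eta>: "0 < \<eta>" "\<eta> \<le> \<delta>"
  shows "(LINT z:H|lebesgue. indicator D z * \<rho> z * heat_v \<tau> \<omega> z) \<ge>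
     C2 * measure lebesgue (H \<inter> D \<inter> {z. snd z \<le> T0 + \<eta>}) * exp (- (sqrt \<tau> * R) - \<tau> * (T0 + \<eta>))
     - M * measure lebesgue H * exp (sqrt \<tau> * R - \<tau> * (T0 + \<delta>))"
proof -
  let ?v = "heat_v \<tau> \<omega>"
  define f where "f z = indicator H z * (indicator D z * \<rho> z * ?v z)" for z
  define L where "L = {z :: 'a \<times> real. snd z \<le> T0 + \<delta>}"
  define E where "E = H \<inter> D \<inter> {z. snd z \<le> T0 + \<eta>}"
  define f1 where "f1 z = f z * indicator L z" for z
  define f2 where "f2 z = f z * indicator (- L) z" for z
  have Hs: "H \<in> sets lebesgue" and Hf: "emeasure lebesgue H < \<infinity>"
    using Hm by (auto intro: fmeasurableD simp: fmeasurable_def)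
  have Ls: "L \<in> sets lebesgue" unfolding L_def
    by (intro closed_leb closed_Collect_le continuous_intros)
  have clsd: "closed {z :: 'a \<times> real. snd z \<le> T0 + \<eta>}" by (intro closed_Collect_le continuous_intros)
  have Es: "E \<in> sets lebesgue" unfolding E_def
    by (intro sets.Int Hs Dm closed_leb clsd)
  have Em: "E \<in> lmeasurable" by (rule fmeasurableI2[OF Hm _ Es]) (auto simp: E_def)
  have fm: "f \<in> borel_measurable lebesgue"
  proof -
    have "(\<lambda>z. indicator H z * ((indicator D z * \<rho> z) * ?v z)) \<in> borel_measurable lebesgue"
      by (intro borel_measurable_times borel_measurable_indicator Hs \<rho>m heat_v_meas)
    then show ?thesis unfolding f_def by simp
  qed
  have f1m: "f1 \<in> borel_measurable lebesgue" unfolding f1_def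
    by (intro borel_measurable_times fm borel_measurable_indicator Ls)
  have Lc: "- L \<in> sets lebesgue" using sets.compl_sets[OF Ls] by (simp add: Compl_eq_Diff_UNIV)
  have f2m: "f2 \<in> borel_measurable lebesgue" unfolding f2_def
    by (intro borel_measurable_times fm borel_measurable_indicator Lc)
  have vb: "?v z \<le> exp (sqrt \<tau> * R)" if "z \<in> H \<inter> D" for z
  proof -
    have "?v z \<le> exp (sqrt \<tau> * R - \<tau> * 0)"
      using that HD H0 R by (intro heat_v_le \<tau>) (auto simp: mem_Times_iff)
    then show ?thesis by simp
  qed
  have fb: "AE z in lebesgue. \<bar>f z\<bar> \<le> M * exp (sqrt \<tau> * R)"
    using \<rho>b
  proof eventually_elim
    case (elim z)
    show ?case
    proof (cases "z \<in> H \<inter> D")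
      case True
      then have "\<bar>f z\<bar> = \<bar>\<rho> z\<bar> * ?v z" using heat_v_pos[of \<tau> \<omega> z] by (simp add: f_def abs_mult)
      also have "\<dots> \<le> M * exp (sqrt \<tau> * R)"
        using True elim vb[OF True] by (intro mult_mono) (auto intro: less_imp_le heat_v_pos)
      finally show ?thesis .
    next
      case False then show ?thesis using M by (auto simp: f_def)
    qed
  qed
  have f1i: "integrable lebesgue f1"
  proof (rule integrableI_bounded_set[OF Hs f1m Hf])
    show "AE x in lebesgue. x \<in> H \<longrightarrow> norm (f1 x) \<le> M * exp (sqrt \<tau> * R)"
      using fb by eventually_elim (auto simp: f1_def abs_mult indicator_def)
    show "AE x in lebesgue. x \<notin> H \<longrightarrow> f1 x = 0" by (auto simp: f1_def f_def)
  qed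
  have f2i: "integrable lebesgue f2"
  proof (rule integrableI_bounded_set[OF Hs f2m Hf])
    show "AE x in lebesgue. x \<in> H \<longrightarrow> norm (f2 x) \<le> M * exp (sqrt \<tau> * R)"
      using fb by eventually_elim (auto simp: f2_def abs_mult indicator_def)
    show "AE x in lebesgue. x \<notin> H \<longrightarrow> f2 x = 0" by (auto simp: f2_def f_def)
  qed
  have fsplit: "f = (\<lambda>z. f1 z + f2 z)" by (auto simp: fun_eq_iff f1_def f2_def indicator_def)
  have lhs: "(LINT z:H|lebesgue. indicator D z * \<rho> z * ?v z) = integral\<^sup>L lebesgue f1 + integral\<^sup>L lebesgue f2"
  proof -
    have "(LINT z:H|lebesgue. indicator D z * \<rho> z * ?v z) = integral\<^sup>L lebesgue f"
      unfolding set_lebesgue_integral_def f_def by simp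
    also have "\<dots> = integral\<^sup>L lebesgue f1 + integral\<^sup>L lebesgue f2"
      unfolding fsplit by (rule Bochner_Integration.integral_add[OF f1i f2i])
    finally show ?thesis .
  qed
  let ?c = "C2 * exp (- (sqrt \<tau> * R) - \<tau> * (T0 + \<eta>))"
  have gi: "integrable lebesgue (\<lambda>z. ?c * indicator E z)"
    using Em by (intro integrable_mult_right integrable_real_indicator) (auto simp: fmeasurable_def)
  have "integral\<^sup>L lebesgue (\<lambda>z. ?c * indicator E z) \<le> integral\<^sup>L lebesgue f1"
  proof (rule integral_mono_AE[OF gi f1i])
    show "AE z in lebesgue. ?c * indicator E z \<le> f1 z"
      using \<rho>s
    proof eventually_elim
      case (elim z)
      show ?case
      proof (cases "z \<in> H \<inter> D \<and> z \<in> L")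
        case True
        then have t: "snd z \<ge> T0" "fst z \<in> closure \<Omega>" using HD by (auto simp: mem_Times_iff)
        then have \<rho>z: "\<rho> z \<ge> C2" using True elim \<eta> by (auto simp: L_def)
        have f1z: "f1 z = \<rho> z * ?v z" using True by (simp add: f1_def f_def)
        show ?thesis
        proof (cases "z \<in> E")
          case True
          have "?c \<le> C2 * ?v z"
            using True t R C2 by (intro mult_left_mono heat_v_ge \<tau>) (auto simp: E_def)
          also have "\<dots> \<le> \<rho> z * ?v z" using \<rho>z by (intro mult_right_mono) (auto intro: less_imp_le heat_v_pos)
          finally show ?thesis using True f1z by simp
        next
          case False
          have "0 \<le> \<rho> z * ?v z" using \<rho>z C2 by (intro mult_nonneg_nonneg) (auto intro: less_imp_le heat_v_pos)
          then show ?thesis using False f1z by simp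
        qed
      next
        case False
        then have "f1 z = 0" by (auto simp: f1_def f_def)
        moreover have "z \<notin> E" using False \<eta> by (auto simp: E_def L_def)
        ultimately show ?thesis by simp
      qed
    qed
  qed
  moreover have "integral\<^sup>L lebesgue (\<lambda>z. ?c * indicator E z) = ?c * measure lebesgue E"
    by (simp add: integral_indicator)
  ultimately have low1: "?c * measure lebesgue E \<le> integral\<^sup>L lebesgue f1" by simp
  let ?d = "M * exp (sqrt \<tau> * R - \<tau> * (T0 + \<delta>))"
  have hi: "integrable lebesgue (\<lambda>z. - (?d * indicator H z))"
    using Hs Hf by (intro integrable_minus integrable_mult_right integrable_real_indicator) auto
  have "integral\<^sup>L lebesgue (\<lambda>z. - (?d * indicator H z)) \<le> integral\<^sup>L lebesgue f2"
  proof (rule integral_mono_AE[OF hi f2i])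
    show "AE z in lebesgue. - (?d * indicator H z) \<le> f2 z"
      using \<rho>b
    proof eventually_elim
      case (elim z)
      show ?case
      proof (cases "z \<in> H \<inter> D \<and> z \<notin> L")
        case True
        then have t: "snd z \<ge> T0 + \<delta>" "fst z \<in> closure \<Omega>" using HD by (auto simp: mem_Times_iff L_def)
        have f2z: "f2 z = \<rho> z * ?v z" using True by (simp add: f2_def f_def)
        have "\<bar>\<rho> z * ?v z\<bar> = \<bar>\<rho> z\<bar> * ?v z" using heat_v_pos[of \<tau> \<omega> z] by (simp add: abs_mult)
        also have "\<dots> \<le> M * exp (sqrt \<tau> * R - \<tau> * (T0 + \<delta>))"
          using True elim t R by (intro mult_mono heat_v_le \<tau>) (auto intro: less_imp_le heat_v_pos)
        finally show ?thesis using True f2z by simp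
      next
        case False
        then have "f2 z = 0" by (auto simp: f2_def f_def)
        moreover have "0 \<le> ?d * indicator H z" using M by simp
        ultimately show ?thesis by simp
      qed
    qed
  qed
  moreover have "integral\<^sup>L lebesgue (\<lambda>z. - (?d * indicator H z)) = - (?d * measure lebesgue H)"
    by (simp add: integral_indicator)
  ultimately have low2: "- (?d * measure lebesgue H) \<le> integral\<^sup>L lebesgue f2" by simp
  show ?thesis unfolding lhs using low1 low2 by (simp add: E_def mult_ac)
qed


lemma B_upper:
  fixes \<Omega> :: "'a::euclidean_space set" and D :: "('a \<times> real) set" and \<rho> :: "'a \<times> real \<Rightarrow> real"
  assumes Hm: "H \<in> lmeasurable" and HD: "H \<inter> D \<subseteq> closure \<Omega> \<times> {T0..}"
    and \<rho>b: "AE z in lebesgue. z \<in> D \<longrightarrow> \<bar>\<rho> z\<bar> \<le> M"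
    and M: "M \<ge> 0" and \<tau>: "\<tau> \<ge> 0"
    and R: "\<And>x. x \<in> closure \<Omega> \<Longrightarrow> \<bar>x \<bullet> \<omega>\<bar> \<le> R"
  shows "\<bar>LINT z:H|lebesgue. indicator D z * \<rho> z * heat_v \<tau> \<omega> z\<bar> \<le>
     M * measure lebesgue H * exp (sqrt \<tau> * R - \<tau> * T0)"
proof -
  let ?v = "heat_v \<tau> \<omega>"
  let ?d = "M * exp (sqrt \<tau> * R - \<tau> * T0)"
  define f where "f z = indicator H z * (indicator D z * \<rho> z * ?v z)" for z
  have Hs: "H \<in> sets lebesgue" and Hf: "emeasure lebesgue H < \<infinity>"
    using Hm by (auto intro: fmeasurableD simp: fmeasurable_def)
  have hi: "integrable lebesgue (\<lambda>z. ?d * indicator H z)"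
    using Hs Hf by (intro integrable_mult_right integrable_real_indicator) auto
  have "\<bar>integral\<^sup>L lebesgue f\<bar> \<le> (\<integral>z. norm (f z) \<partial>lebesgue)"
    using integral_norm_bound[of lebesgue f] by simp
  also have "\<dots> \<le> integral\<^sup>L lebesgue (\<lambda>z. ?d * indicator H z)"
  proof (rule integral_mono_AE'[OF hi])
    show "AE z in lebesgue. 0 \<le> ?d * indicator H z" using M by simp
    show "AE z in lebesgue. norm (f z) \<le> ?d * indicator H z"
      using \<rho>b
    proof eventually_elim
      case (elim z)
      show ?case
      proof (cases "z \<in> H \<inter> D")
        case True
        then have t: "snd z \<ge> T0" "fst z \<in> closure \<Omega>" using HD by (auto simp: mem_Times_iff)
        have "norm (f z) = \<bar>\<rho> z\<bar> * ?v z" using True heat_v_pos[of \<tau> \<omega> z] by (simp add: f_def abs_mult)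
        also have "\<dots> \<le> ?d"
          using True elim t R by (intro mult_mono heat_v_le \<tau>) (auto intro: less_imp_le heat_v_pos)
        finally show ?thesis using True by simp
      next
        case False
        then show ?thesis using M by (auto simp: f_def)
      qed
    qed
  qed
  also have "\<dots> = ?d * measure lebesgue H" by (simp add: integral_indicator)
  finally show ?thesis unfolding set_lebesgue_integral_def f_def by (simp add: mult_ac)
qed

lemma A_upper:
  fixes \<Omega> :: "'a::euclidean_space set" and u :: "'a \<times> real \<Rightarrow> real"
  assumes ui: "set_integrable lebesgue \<Omega> (\<lambda>x. u (x, T))"
    and \<tau>: "\<tau> \<ge> 0"
    and R: "\<And>x. x \<in> \<Omega> \<Longrightarrow> \<bar>x \<bullet> \<omega>\<bar> \<le> R"
  shows "\<bar>LINT x:\<Omega>|lebesgue. u (x, T) * heat_v \<tau> \<omega> (x, T)\<bar> \<le>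
     (LINT x|lebesgue. \<bar>indicator \<Omega> x * u (x, T)\<bar>) * exp (sqrt \<tau> * R - \<tau> * T)"
proof -
  let ?e = "exp (sqrt \<tau> * R - \<tau> * T)"
  define f where "f x = indicator \<Omega> x * (u (x, T) * heat_v \<tau> \<omega> (x, T))" for x
  have ii: "integrable lebesgue (\<lambda>x. indicator \<Omega> x * u (x, T))"
    using ui unfolding set_integrable_def by simp
  have hi: "integrable lebesgue (\<lambda>x. ?e * \<bar>indicator \<Omega> x * u (x, T)\<bar>)"
    by (intro integrable_mult_right integrable_abs ii)
  have "\<bar>integral\<^sup>L lebesgue f\<bar> \<le> (\<integral>z. norm (f z) \<partial>lebesgue)"
    using integral_norm_bound[of lebesgue f] by simp
  also have "\<dots> \<le> integral\<^sup>L lebesgue (\<lambda>x. ?e * \<bar>indicator \<Omega> x * u (x, T)\<bar>)"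
  proof (rule integral_mono_AE'[OF hi])
    show "AE z in lebesgue. 0 \<le> ?e * \<bar>indicator \<Omega> z * u (z, T)\<bar>" by simp
    show "AE z in lebesgue. norm (f z) \<le> ?e * \<bar>indicator \<Omega> z * u (z, T)\<bar>"
    proof (rule AE_I2)
      fix x
      show "norm (f x) \<le> ?e * \<bar>indicator \<Omega> x * u (x, T)\<bar>"
      proof (cases "x \<in> \<Omega>")
        case True
        have "heat_v \<tau> \<omega> (x, T) \<le> ?e" using R[OF True] by (intro heat_v_le \<tau>) auto
        then have "\<bar>u (x, T)\<bar> * heat_v \<tau> \<omega> (x, T) \<le> \<bar>u (x, T)\<bar> * ?e" by (intro mult_left_mono) auto
        then show ?thesis using True heat_v_pos[of \<tau> \<omega> "(x, T)"] by (simp add: f_def abs_mult mult_ac)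
      next
        case False then show ?thesis by (simp add: f_def)
      qed
    qed
  qed
  also have "\<dots> = ?e * (LINT x|lebesgue. \<bar>indicator \<Omega> x * u (x, T)\<bar>)" by simp
  finally show ?thesis unfolding set_lebesgue_integral_def f_def by (simp add: mult_ac)
qed

lemma meas_pos:
  fixes \<Omega> :: "'a::euclidean_space set" and D :: "('a \<times> real) set"
  assumes fr: "frontier \<Omega> \<in> null_sets lebesgue" and op: "open \<Omega>" and bd: "bounded \<Omega>"
    and Dm: "D \<in> sets lebesgue" and Dsub: "D \<subseteq> closure \<Omega> \<times> {T0..T}"
    and T0: "T0 \<ge> 0" and \<eta>: "0 < \<eta>" "\<eta> \<le> \<delta>" and \<delta>: "\<delta> < T - T0"
    and C1: "C1 > 0"
    and Ds: "AE s in lborel. s \<in> {0..\<delta>} \<longrightarrow>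
               emeasure lebesgue {x. (x, T0 + s) \<in> D} \<ge> ennreal (C1 * s powr p)"
  shows "measure lebesgue (\<Omega> \<times> {0<..<T} \<inter> D \<inter> {z. snd z \<le> T0 + \<eta>}) > 0"
proof (rule ccontr)
  define E where "E = \<Omega> \<times> {0<..<T} \<inter> D \<inter> {z. snd z \<le> T0 + \<eta>}"
  assume "\<not> measure lebesgue (\<Omega> \<times> {0<..<T} \<inter> D \<inter> {z. snd z \<le> T0 + \<eta>}) > 0"
  then have m0: "measure lebesgue E = 0" unfolding E_def using measure_nonneg[of lebesgue] by (meson not_le order_antisym)
  have Hs: "\<Omega> \<times> {0<..<T} \<in> sets lebesgue"
    by (rule sets_completionI_sets) (simp add: borel_open open_Times op)
  have cl: "{z :: 'a \<times> real. snd z \<le> T0 + \<eta>} \<in> sets lebesgue"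
    by (rule sets_completionI_sets) (simp add: borel_closed closed_Collect_le continuous_intros)
  have Es: "E \<in> sets lebesgue" unfolding E_def by (intro sets.Int Hs Dm cl)
  have Eb: "bounded E" unfolding E_def using bd by (intro bounded_subset[OF bounded_Times[of \<Omega> "{0<..<T}"]]) auto
  have Em: "E \<in> lmeasurable" by (rule bounded_set_imp_lmeasurable[OF Eb Es])
  have "emeasure lebesgue E = 0" using emeasure_eq_measure2[OF Em] m0 by simp
  then have En: "E \<in> null_sets lebesgue" using Es by (rule null_setsI)
  define N where "N = E \<union> frontier \<Omega> \<times> UNIV"
  have Nn: "N \<in> null_sets lebesgue" unfolding N_def
    by (intro null_sets.Un En times_null fr)
  have sub: "{x. (x, T0 + s) \<in> D} \<subseteq> {x. (x, T0 + s) \<in> N}" if s: "0 < s" "s \<le> \<eta>" for s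
  proof
    fix x assume x: "x \<in> {x. (x, T0 + s) \<in> D}"
    then have xc: "x \<in> closure \<Omega>" using Dsub by auto
    show "x \<in> {x. (x, T0 + s) \<in> N}"
    proof (cases "x \<in> frontier \<Omega>")
      case True then show ?thesis by (simp add: N_def)
    next
      case False
      then have "x \<in> \<Omega>" using xc op by (simp add: frontier_def interior_open)
      then show ?thesis using x s T0 \<eta> \<delta> by (simp add: N_def E_def)
    qed
  qed
  have ae: "AE s in lborel. {x. (x, T0 + s) \<in> N} \<in> null_sets lebesgue"
    by (rule AE_lborel_shift[OF section_null[OF Nn]])
  have "AE s in lborel. s \<notin> {0<..\<eta>}"
    using ae Ds
  proof eventually_elim
    case (elim s)
    show ?case
    proof
      assume s: "s \<in> {0<..\<eta>}"
      have "emeasure lebesgue {x. (x, T0 + s) \<in> D} \<le> emeasure lebesgue {x. (x, T0 + s) \<in> N}"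
        using sub[of s] s elim(1) by (intro emeasure_mono) auto
      also have "\<dots> = 0" using elim(1) by auto
      finally have "ennreal (C1 * s powr p) \<le> 0" using elim(2) s \<eta> by (auto intro: order_trans)
      moreover have "C1 * s powr p > 0" using s C1 by simp
      ultimately show False using s C1 by simp
    qed
  qed
  then have "{0<..\<eta>} \<in> null_sets lborel" by (subst AE_iff_null_sets) auto
  then have "emeasure lborel {0<..\<eta>} = 0" by auto
  then show False using \<eta> by simp
qed

theorem theorem2p1:
  fixes \<Omega> :: "(real^'n) set" and \<nu> :: "real^'n \<Rightarrow> real^'n"
    and u g0 g1 \<rho> :: "(real^'n) \<times> real \<Rightarrow> real" and D :: "((real^'n) \<times> real) set"
    and T T0 \<delta> C1 C2 p :: real and \<omega> :: "real^'n"
  assumes dim: "CARD('n) \<in> {1, 2, 3}"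
    and dom: "bounded_smooth_domain \<Omega>"
    and normal: "outward_unit_normal \<Omega> \<nu>"
    and T: "T > 0"
    and u_int: "set_integrable lebesgue (\<Omega> \<times> {0<..<T}) u"
    and uT_int: "set_integrable lebesgue \<Omega> (\<lambda>x. u (x, T))"
    and g0_int: "set_integrable (surface_measure \<Otimes>\<^sub>M lborel) (frontier \<Omega> \<times> {0<..<T}) g0"
    and g1_int: "set_integrable (surface_measure \<Otimes>\<^sub>M lborel) (frontier \<Omega> \<times> {0<..<T}) g1"
    and heat: "\<And>\<phi>. smooth_on UNIV \<phi> \<Longrightarrow>
        (LINT x : \<Omega> | lebesgue. u (x, T) * \<phi> (x, T))
        - (LINT z : \<Omega> \<times> {0<..<T} | lebesgue. u z * (d_t \<phi> z + lap_x \<phi> z))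
        = (LINT z : \<Omega> \<times> {0<..<T} | lebesgue. indicator D z * \<rho> z * \<phi> z)
        + (LINT z : frontier \<Omega> \<times> {0<..<T} | (surface_measure \<Otimes>\<^sub>M lborel).
             g1 z * \<phi> z - g0 z * dd (\<nu> (fst z), 0) \<phi> z)"
    and T0: "0 \<le> T0" "T0 < T"
    and D_meas: "D \<in> sets lebesgue"
    and D_sub: "D \<subseteq> closure \<Omega> \<times> {T0..T}"
    and \<rho>_meas: "(\<lambda>z. indicator D z * \<rho> z) \<in> borel_measurable lebesgue"
    and \<rho>_bdd: "\<exists>M. AE z in lebesgue. z \<in> D \<longrightarrow> \<bar>\<rho> z\<bar> \<le> M"
    and \<delta>: "0 < \<delta>" "\<delta> < T - T0"
    and C: "0 < C1" "0 < C2" "0 \<le> p"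
    and Ds: "AE s in lborel. s \<in> {0..\<delta>} \<longrightarrow>
               emeasure lebesgue {x. (x, T0 + s) \<in> D} \<ge> ennreal (C1 * s powr p)"
    and sign: "(AE z in lebesgue. z \<in> D \<and> snd z \<in> {T0..T0+\<delta>} \<longrightarrow> \<rho> z \<ge> C2)
             \<or> (AE z in lebesgue. z \<in> D \<and> snd z \<in> {T0..T0+\<delta>} \<longrightarrow> - \<rho> z \<ge> C2)"
    and \<omega>: "norm \<omega> = 1"
  shows "(\<forall>\<^sub>F \<tau> in at_top. heat_I \<Omega> \<nu> g0 g1 T \<omega> 0 \<tau> \<noteq> 0)
       \<and> ((\<lambda>\<tau>. ln \<bar>heat_I \<Omega> \<nu> g0 g1 T \<omega> 0 \<tau>\<bar> / \<tau>) \<longlongrightarrow> - T0) at_top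
       \<and> (\<forall>s. s < T0 \<longrightarrow> ((\<lambda>\<tau>. \<bar>heat_I \<Omega> \<nu> g0 g1 T \<omega> s \<tau>\<bar>) \<longlongrightarrow> 0) at_top)
       \<and> (\<forall>s. s > T0 \<longrightarrow> filterlim (\<lambda>\<tau>. \<bar>heat_I \<Omega> \<nu> g0 g1 T \<omega> s \<tau>\<bar>) at_top at_top)"
proof -
  have op: "open \<Omega>" and bd: "bounded \<Omega>" using dom unfolding bounded_smooth_domain_def by auto
  have fr: "frontier \<Omega> \<in> null_sets lebesgue" by (rule frontier_null[OF dom])
  obtain R0 where R0: "\<And>x. x \<in> closure \<Omega> \<Longrightarrow> norm x \<le> R0"
    using bounded_closure[OF bd] unfolding bounded_iff by blast
  define R where "R = max R0 0"
  have R0le: "R \<ge> 0" by (simp add: R_def)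
  have R: "\<bar>x \<bullet> \<omega>\<bar> \<le> R" if "x \<in> closure \<Omega>" for x
  proof -
    have "\<bar>x \<bullet> \<omega>\<bar> \<le> norm x * norm \<omega>" by (rule Cauchy_Schwarz_ineq2)
    also have "\<dots> \<le> R" using R0[OF that] \<omega> by (simp add: R_def)
    finally show ?thesis .
  qed
  have R': "\<bar>x \<bullet> \<omega>\<bar> \<le> R" if "x \<in> \<Omega>" for x using R that closure_subset by blast
  obtain M0 where M0: "AE z in lebesgue. z \<in> D \<longrightarrow> \<bar>\<rho> z\<bar> \<le> M0" using \<rho>_bdd by blast
  define M where "M = max M0 0"
  have M: "M \<ge> 0" by (simp add: M_def)
  have \<rho>b: "AE z in lebesgue. z \<in> D \<longrightarrow> \<bar>\<rho> z\<bar> \<le> M"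
    using M0 by eventually_elim (auto simp: M_def)
  define H where "H = \<Omega> \<times> {0<..<T}"
  have Hs: "H \<in> sets lebesgue" unfolding H_def
    by (rule sets_completionI_sets) (simp add: borel_open open_Times op)
  have Hm: "H \<in> lmeasurable" unfolding H_def
    by (rule bounded_set_imp_lmeasurable[OF bounded_Times[OF bd] Hs[unfolded H_def]]) simp
  have HD: "H \<inter> D \<subseteq> closure \<Omega> \<times> {T0..}" using D_sub by (auto simp: H_def)
  have H0: "H \<subseteq> UNIV \<times> {0..}" by (auto simp: H_def)
  define KA where "KA = (LINT x|lebesgue. \<bar>indicator \<Omega> x * u (x, T)\<bar>)"
  have KA: "KA \<ge> 0" unfolding KA_def by simp
  define K1 where "K1 = M * measure lebesgue H + KA"
  have K1: "K1 \<ge> 0" unfolding K1_def using M KA by simp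
  define B where "B \<tau> = (LINT z:H|lebesgue. indicator D z * \<rho> z * heat_v \<tau> \<omega> z)" for \<tau>
  define A where "A \<tau> = (LINT x:\<Omega>|lebesgue. u (x, T) * heat_v \<tau> \<omega> (x, T))" for \<tau>
  define G where "G \<tau> = B \<tau> - A \<tau>" for \<tau>
  have FG: "eventually (\<lambda>\<tau>. heat_I \<Omega> \<nu> g0 g1 T \<omega> s \<tau> = exp (\<tau> * s) * G \<tau>) at_top" for s
    using eventually_gt_at_top[of 0]
  proof eventually_elim
    case (elim \<tau>)
    let ?v = "heat_v \<tau> \<omega>"
    let ?S = "LINT z : frontier \<Omega> \<times> {0<..<T} | (surface_measure \<Otimes>\<^sub>M lborel).
             g1 z * ?v z - g0 z * dd (\<nu> (fst z), 0) ?v z"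
    have h: "A \<tau> - (LINT z : \<Omega> \<times> {0<..<T} | lebesgue. u z * (d_t ?v z + lap_x ?v z)) = B \<tau> + ?S"
      using heat[OF smooth_heat_v[of \<tau> \<omega>]] by (simp add: A_def B_def H_def)
    have "(LINT z : \<Omega> \<times> {0<..<T} | lebesgue. u z * (d_t ?v z + lap_x ?v z)) = 0"
      using heat_v_eq0[OF elim \<omega>] by simp
    with h have hS: "?S = A \<tau> - B \<tau>" by simp
    have "(LINT z : frontier \<Omega> \<times> {0<..<T} | (surface_measure \<Otimes>\<^sub>M lborel).
             dd (\<nu> (fst z), 0) ?v z * g0 z - g1 z * ?v z) = - ?S"
      unfolding set_lebesgue_integral_def
      by (subst integral_minus[symmetric]) (simp add: algebra_simps)
    then show ?case unfolding heat_I_def hS G_def by simp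
  qed
  have up: "eventually (\<lambda>\<tau>. \<bar>G \<tau>\<bar> \<le> K1 * exp (sqrt \<tau> * R - \<tau> * T0)) at_top"
    using eventually_ge_at_top[of 0]
  proof eventually_elim
    case (elim \<tau>)
    have b: "\<bar>B \<tau>\<bar> \<le> M * measure lebesgue H * exp (sqrt \<tau> * R - \<tau> * T0)"
      unfolding B_def by (rule B_upper[OF Hm HD \<rho>b M elim R])
    have "\<bar>A \<tau>\<bar> \<le> KA * exp (sqrt \<tau> * R - \<tau> * T)"
      unfolding A_def KA_def by (rule A_upper[OF uT_int elim R'])
    also have "\<dots> \<le> KA * exp (sqrt \<tau> * R - \<tau> * T0)"
      using KA elim T0 by (intro mult_left_mono) (auto intro: mult_left_mono)
    finally have a: "\<bar>A \<tau>\<bar> \<le> KA * exp (sqrt \<tau> * R - \<tau> * T0)" .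
    show ?case using a b unfolding G_def K1_def by (simp add: algebra_simps)
  qed
  obtain \<sigma> :: real where \<sigma>: "\<bar>\<sigma>\<bar> = 1"
    and \<rho>s: "AE z in lebesgue. z \<in> D \<and> snd z \<in> {T0..T0+\<delta>} \<longrightarrow> \<sigma> * \<rho> z \<ge> C2"
  proof (cases "AE z in lebesgue. z \<in> D \<and> snd z \<in> {T0..T0+\<delta>} \<longrightarrow> \<rho> z \<ge> C2")
    case True then show ?thesis using that[of 1] by simp
  next
    case False
    then have "AE z in lebesgue. z \<in> D \<and> snd z \<in> {T0..T0+\<delta>} \<longrightarrow> (-1) * \<rho> z \<ge> C2"
      using sign by simp
    then show ?thesis using that[of "-1"] by simp
  qed
  have low: "\<exists>c>0. eventually (\<lambda>\<tau>. \<bar>G \<tau>\<bar> \<ge>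
        c * exp (- (sqrt \<tau> * R) - \<tau> * (T0 + \<eta>)) - K1 * exp (sqrt \<tau> * R - \<tau> * (T0 + \<delta>))) at_top"
    if \<eta>: "0 < \<eta>" "\<eta> < \<delta>" for \<eta>
  proof -
    define c where "c = C2 * measure lebesgue (H \<inter> D \<inter> {z. snd z \<le> T0 + \<eta>})"
    have cpos: "c > 0" unfolding c_def H_def using C(2)
      by (intro mult_pos_pos meas_pos[OF fr op bd D_meas D_sub T0(1) \<eta>(1) _ \<delta>(2) C(1) Ds]) (use \<eta> in auto)
    have \<rho>'m: "(\<lambda>z. indicator D z * (\<sigma> * \<rho> z)) \<in> borel_measurable lebesgue"
    proof -
      have "(\<lambda>z. \<sigma> * (indicator D z * \<rho> z)) \<in> borel_measurable lebesgue"
        by (intro borel_measurable_times borel_measurable_const \<rho>_meas)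
      then show ?thesis by (simp add: mult_ac)
    qed
    have \<rho>'b: "AE z in lebesgue. z \<in> D \<longrightarrow> \<bar>\<sigma> * \<rho> z\<bar> \<le> M"
      using \<rho>b by eventually_elim (simp add: abs_mult \<sigma>)
    show ?thesis
    proof (intro exI[of _ c] conjI)
      show "eventually (\<lambda>\<tau>. \<bar>G \<tau>\<bar> \<ge>
        c * exp (- (sqrt \<tau> * R) - \<tau> * (T0 + \<eta>)) - K1 * exp (sqrt \<tau> * R - \<tau> * (T0 + \<delta>))) at_top"
        using eventually_ge_at_top[of 0]
      proof eventually_elim
        case (elim \<tau>)
        have bl: "(LINT z:H|lebesgue. indicator D z * (\<sigma> * \<rho> z) * heat_v \<tau> \<omega> z) \<ge>
            c * exp (- (sqrt \<tau> * R) - \<tau> * (T0 + \<eta>))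
            - M * measure lebesgue H * exp (sqrt \<tau> * R - \<tau> * (T0 + \<delta>))"
          unfolding c_def
          by (rule B_lower[OF Hm HD H0 D_meas \<rho>'m \<rho>'b \<rho>s C(2) M elim R \<eta>(1) less_imp_le[OF \<eta>(2)]])
        have "(LINT z:H|lebesgue. indicator D z * (\<sigma> * \<rho> z) * heat_v \<tau> \<omega> z)
            = (LINT z:H|lebesgue. \<sigma> * (indicator D z * \<rho> z * heat_v \<tau> \<omega> z))"
          by (simp add: mult_ac)
        also have "\<dots> = \<sigma> * B \<tau>" unfolding B_def by (rule set_integral_mult_right)
        finally have sB: "\<sigma> * B \<tau> \<ge> c * exp (- (sqrt \<tau> * R) - \<tau> * (T0 + \<eta>))
            - M * measure lebesgue H * exp (sqrt \<tau> * R - \<tau> * (T0 + \<delta>))" using bl by simp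
        have "\<bar>A \<tau>\<bar> \<le> KA * exp (sqrt \<tau> * R - \<tau> * T)"
          unfolding A_def KA_def by (rule A_upper[OF uT_int elim R'])
        also have "\<dots> \<le> KA * exp (sqrt \<tau> * R - \<tau> * (T0 + \<delta>))"
          using KA elim \<delta> by (intro mult_left_mono) (auto intro: mult_left_mono)
        finally have a: "\<bar>A \<tau>\<bar> \<le> KA * exp (sqrt \<tau> * R - \<tau> * (T0 + \<delta>))" .
        have sA: "\<sigma> * A \<tau> \<le> \<bar>A \<tau>\<bar>" using \<sigma> by (metis abs_ge_self abs_mult mult_1)
        have "\<sigma> * G \<tau> \<le> \<bar>G \<tau>\<bar>" using \<sigma> by (metis abs_ge_self abs_mult mult_1)
        then show ?case using sB sA a unfolding G_def K1_def by (simp add: algebra_simps)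
      qed
    qed (rule cpos)
  qed
  show ?thesis
    by (rule asym_main[OF \<delta>(1) R0le K1 FG up low])
qed

end
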